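(* Let $A\in\mathbb{R}^{m\times n}$ have singular value decomposition $A=U\Sigma V^\top$ (with $U\in\mathbb{R}^{m\times m}$, $V\in\mathbb{R}^{n\times n}$ orthogonal), let $r=\operatorname{rank}(A)$, let $\lambda:=(\sigma_1^2(A),\ldots,\sigma_r^2(A),0,\ldots,0)^\top\in\mathbb{R}^m$, let $1\le s\le r$, and let $$H_s:=\frac{U\operatorname{diag}\big(e_{s-1}(\lambda_{-1}),\ldots,e_{s-1}(\lambda_{-m})\big)U^\top}{e_s(\lambda)}.$$ Then for every $z\in\operatorname{Range}(A^\top)$, $$z^\top A^\top H_s A z\ \ge\ \frac{\sigma_{\min}^2(A)}{\sigma_s^2(A)+\cdots+\sigma_{\min}^2(A)}\,\|z\|_2^2 .$$
   Context: $\sigma_1(A)\ge\cdots\ge\sigma_r(A)=:\sigma_{\min}(A)>0$ are the nonzero singular values of $A$, so $\sigma_s^2(A)+\cdots+\sigma_{\min}^2(A)=\sum_{j=s}^r\sigma_j^2(A)$. For $\xi\in\mathbb{R}^p$ and $1\le\ell\le p$, $e_\ell(\xi):=\sum_{1\le i_1<\cdots<i_\ell\le p}\xi_{i_1}\cdots\xi_{i_\ell}$, and $e_0(\xi):=1$. For $i\in[m]$, $\lambda_{-i}\in\mathbb{R}^{m-1}$ is $\lambda$ with its $i$-th entry removed. $\operatorname{Range}(A^\top)$ is the column space of $A^\top$. *)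

theory Defs
  imports "Jordan_Normal_Form.Matrix"
begin

definition esym :: "nat set \<Rightarrow> (nat \<Rightarrow> real) \<Rightarrow> nat \<Rightarrow> real" where
  "esym I xi l = (\<Sum>S\<in>{S. S \<subseteq> I \<and> card S = l}. \<Prod>i\<in>S. xi i)"

end

theory Submission imports Defs "Jordan_Normal_Form.Determinant" begin

lemma esym_nonneg:
  assumes "\<forall>i\<in>I. lam i \<ge> 0" shows "esym I lam l \<ge> 0"
  unfolding esym_def using assms by (auto intro!: sum_nonneg prod_nonneg)

lemma esym_bound:
  assumes fin: "finite I" and nn: "\<forall>i\<in>I. lam i \<ge> 0" and s: "1 \<le> s" and JI: "J \<subseteq> I"
    and cov: "\<And>T. T \<subseteq> I \<Longrightarrow> card T = s \<Longrightarrow> (\<forall>t\<in>T. lam t \<noteq> 0) \<Longrightarrow> T \<inter> J \<noteq> {}"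
  shows "esym I lam s \<le> esym I lam (s-1) * sum lam J"
proof -
  define Ts where "Ts = {T. T \<subseteq> I \<and> card T = s}"
  define Tp where "Tp = {T\<in>Ts. \<forall>t\<in>T. lam t \<noteq> 0}"
  define Rs where "Rs = {R. R \<subseteq> I \<and> card R = s - 1}"
  define f where "f T = (SOME j. j \<in> T \<inter> J)" for T
  define g where "g T = (T - {f T}, f T)" for T
  have finTs: "finite Ts" unfolding Ts_def using fin by (auto intro: finite_subset[of _ "Pow I"])
  have finRs: "finite Rs" unfolding Rs_def using fin by (auto intro: finite_subset[of _ "Pow I"])
  have finJ: "finite J" using JI fin finite_subset by blast
  have fT: "f T \<in> T \<inter> J" if "T \<in> Tp" for T
  proof -
    from that have "T \<inter> J \<noteq> {}" using cov unfolding Tp_def Ts_def by auto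
    then show ?thesis unfolding f_def by (metis (mono_tags) ex_in_conv someI_ex)
  qed
  have "esym I lam s = (\<Sum>T\<in>Tp. prod lam T)"
    unfolding esym_def Ts_def[symmetric]
  proof (rule sum.mono_neutral_right[OF finTs])
    show "Tp \<subseteq> Ts" unfolding Tp_def by auto
    show "\<forall>T\<in>Ts - Tp. prod lam T = 0"
    proof
      fix T assume T: "T \<in> Ts - Tp"
      then have "finite T" using fin unfolding Ts_def by (auto intro: finite_subset)
      with T show "prod lam T = 0" unfolding Tp_def by auto
    qed
  qed
  also have "\<dots> = (\<Sum>T\<in>Tp. prod lam (T - {f T}) * lam (f T))"
  proof (rule sum.cong[OF refl])
    fix T assume T: "T \<in> Tp"
    then have "finite T" using fin unfolding Tp_def Ts_def by (auto intro: finite_subset)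
    then show "prod lam T = prod lam (T - {f T}) * lam (f T)"
      using fT[OF T] by (simp add: prod.remove mult.commute)
  qed
  also have "\<dots> = (\<Sum>p\<in>g ` Tp. prod lam (fst p) * lam (snd p))"
  proof (subst sum.reindex)
    show "inj_on g Tp"
    proof (rule inj_onI)
      fix x y assume x: "x \<in> Tp" and y: "y \<in> Tp" and e: "g x = g y"
      then have "x = insert (f x) (x - {f x})" "y = insert (f y) (y - {f y})"
        using fT by auto
      with e show "x = y" unfolding g_def by (metis prod.inject)
    qed
  qed (simp add: g_def)
  also have "\<dots> \<le> (\<Sum>p\<in>Rs \<times> J. prod lam (fst p) * lam (snd p))"
  proof (rule sum_mono2)
    show "finite (Rs \<times> J)" using finRs finJ by auto
    show "g ` Tp \<subseteq> Rs \<times> J"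
    proof
      fix p assume "p \<in> g ` Tp"
      then obtain T where T: "T \<in> Tp" and p: "p = g T" by auto
      have "finite T" using T fin unfolding Tp_def Ts_def by (auto intro: finite_subset)
      then show "p \<in> Rs \<times> J" using T fT[OF T] unfolding p g_def Rs_def Tp_def Ts_def by auto
    qed
    show "\<And>b. b \<in> Rs \<times> J - g ` Tp \<Longrightarrow> 0 \<le> prod lam (fst b) * lam (snd b)"
      using nn JI unfolding Rs_def by (auto intro!: mult_nonneg_nonneg prod_nonneg)
  qed
  also have "\<dots> = esym I lam (s-1) * sum lam J"
    unfolding esym_def Rs_def[symmetric] sum_product
    by (simp add: sum.cartesian_product split_beta)
  finally show ?thesis .
qed

lemma esym_split:
  assumes fin: "finite I" and i: "i \<in> I" and s: "1 \<le> s"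
  shows "esym I lam s = lam i * esym (I - {i}) lam (s-1) + esym (I - {i}) lam s"
proof -
  define Ts where "Ts = {T. T \<subseteq> I \<and> card T = s}"
  have finTs: "finite Ts" unfolding Ts_def using fin by (auto intro: finite_subset[of _ "Pow I"])
  have "esym I lam s = (\<Sum>T\<in>{T\<in>Ts. i \<in> T}. prod lam T) + (\<Sum>T\<in>{T\<in>Ts. i \<notin> T}. prod lam T)"
    unfolding esym_def Ts_def[symmetric] using finTs
    by (subst sum.union_disjoint[symmetric]) (auto intro: sum.cong)
  also have "{T\<in>Ts. i \<notin> T} = {T. T \<subseteq> I - {i} \<and> card T = s}" unfolding Ts_def by auto
  also have "{T\<in>Ts. i \<in> T} = insert i ` {R. R \<subseteq> I - {i} \<and> card R = s - 1}"
  proof (intro equalityI subsetI)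
    fix T assume T: "T \<in> {T\<in>Ts. i \<in> T}"
    then have "finite T" using fin unfolding Ts_def by (auto intro: finite_subset)
    with T have "T = insert i (T - {i})" "T - {i} \<subseteq> I - {i}" "card (T - {i}) = s - 1"
      unfolding Ts_def by auto
    then show "T \<in> insert i ` {R. R \<subseteq> I - {i} \<and> card R = s - 1}" by blast
  next
    fix T assume "T \<in> insert i ` {R. R \<subseteq> I - {i} \<and> card R = s - 1}"
    then obtain R where R: "R \<subseteq> I - {i}" "card R = s - 1" "T = insert i R" by auto
    have "finite R" using R fin by (auto intro: finite_subset)
    moreover have "i \<notin> R" using R by auto
    ultimately show "T \<in> {T\<in>Ts. i \<in> T}" using R i s unfolding Ts_def by auto
  qed
  also have "(\<Sum>T\<in>insert i ` {R. R \<subseteq> I - {i} \<and> card R = s - 1}. prod lam T)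
      = (\<Sum>R\<in>{R. R \<subseteq> I - {i} \<and> card R = s - 1}. prod lam (insert i R))"
  proof (rule sum.reindex_cong[OF _ refl refl])
    show "inj_on (insert i) {R. R \<subseteq> I - {i} \<and> card R = s - 1}"
    proof (rule inj_onI)
      fix x y assume "x \<in> {R. R \<subseteq> I - {i} \<and> card R = s - 1}" "y \<in> {R. R \<subseteq> I - {i} \<and> card R = s - 1}"
        and e: "insert i x = insert i y"
      then have "i \<notin> x" "i \<notin> y" by auto
      with e show "x = y" by (metis Diff_insert_absorb)
    qed
  qed
  also have "\<dots> = (\<Sum>R\<in>{R. R \<subseteq> I - {i} \<and> card R = s - 1}. lam i * prod lam R)"
  proof (rule sum.cong[OF refl])
    fix R assume "R \<in> {R. R \<subseteq> I - {i} \<and> card R = s - 1}"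
    moreover then have "finite R" using fin by (auto intro: finite_subset)
    ultimately show "prod lam (insert i R) = lam i * prod lam R" by (subst prod.insert) auto
  qed
  finally show ?thesis unfolding esym_def by (simp add: sum_distrib_left)
qed


lemma coef_bound:
  fixes lam :: "nat \<Rightarrow> real"
  assumes pos: "\<And>j. j < r \<Longrightarrow> lam j > 0" and zero: "\<And>j. r \<le> j \<Longrightarrow> lam j = 0"
    and mono: "\<And>i j. i \<le> j \<Longrightarrow> j < r \<Longrightarrow> lam j \<le> lam i"
    and rm: "r \<le> m" and s: "1 \<le> s" "s \<le> r" and i: "i < r"
  shows "lam (r-1) / (\<Sum>j = s - 1..<r. lam j) \<le>
     esym ({0..<m} - {i}) lam (s-1) * lam i / esym {0..<m} lam s"
proof -
  define E where "E = esym {0..<m} lam s"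
  define d where "d = esym ({0..<m} - {i}) lam (s-1)"
  define F where "F = esym ({0..<m} - {i}) lam s"
  define T where "T = (\<Sum>j = s - 1..<r. lam j)"
  define lm where "lm = lam (r-1)"
  have nn: "\<forall>j\<in>I. lam j \<ge> 0" for I using pos zero by (metis less_eq_real_def not_le order_refl)
  have lm_pos: "lm > 0" unfolding lm_def using pos s by auto
  have lm_le: "lm \<le> lam j" if "j < r" for j unfolding lm_def using mono that by auto
  have lmi: "lm \<le> lam i" using lm_le i .
  have d0: "d \<ge> 0" unfolding d_def by (rule esym_nonneg[OF nn])
  have F0: "F \<ge> 0" unfolding F_def by (rule esym_nonneg[OF nn])
  have split: "E = lam i * d + F" unfolding E_def d_def F_def
    by (rule esym_split) (use i rm s in auto)
  have Tge: "T \<ge> lm" unfolding T_def lm_def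
    by (rule member_le_sum) (use s pos in \<open>auto intro: less_imp_le\<close>)
  have nzT: "T' \<subseteq> {0..<r} - {i}" if "T' \<subseteq> {0..<m} - {i}" "\<forall>t\<in>T'. lam t \<noteq> 0" for T'
    using that zero by (force simp: not_less)
  have FB: "F \<le> d * (T - lm)"
  proof (cases "s - 1 \<le> i")
    case True
    have "F \<le> d * sum lam ({s-1..<r} - {i})" unfolding F_def d_def
    proof (rule esym_bound[OF _ nn s(1)])
      show "{s - 1..<r} - {i} \<subseteq> {0..<m} - {i}" using rm by auto
      fix T' assume T': "T' \<subseteq> {0..<m} - {i}" "card T' = s" "\<forall>t\<in>T'. lam t \<noteq> 0"
      show "T' \<inter> ({s - 1..<r} - {i}) \<noteq> {}"
      proof
        assume "T' \<inter> ({s - 1..<r} - {i}) = {}"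
        with nzT[OF T'(1,3)] have "T' \<subseteq> {0..<s-1}" by (auto simp: disjoint_iff subset_iff not_le)
        then have "card T' \<le> s - 1" using card_mono[of "{0..<s-1}" T'] by auto
        with T'(2) s show False by auto
      qed
    qed auto
    also have "sum lam ({s-1..<r} - {i}) = T - lam i" unfolding T_def
      using True i by (subst sum_diff1) auto
    also have "d * (T - lam i) \<le> d * (T - lm)" using lmi d0 by (intro mult_left_mono) auto
    finally show ?thesis .
  next
    case False
    have "F \<le> d * sum lam {s..<r}" unfolding F_def d_def
    proof (rule esym_bound[OF _ nn s(1)])
      show "{s..<r} \<subseteq> {0..<m} - {i}" using rm False by auto
      fix T' assume T': "T' \<subseteq> {0..<m} - {i}" "card T' = s" "\<forall>t\<in>T'. lam t \<noteq> 0"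
      show "T' \<inter> {s..<r} \<noteq> {}"
      proof
        assume "T' \<inter> {s..<r} = {}"
        with nzT[OF T'(1,3)] have "T' \<subseteq> {0..<s} - {i}" by (auto simp: disjoint_iff subset_iff not_le)
        then have "card T' \<le> card ({0..<s} - {i})" using card_mono[of "{0..<s} - {i}" T'] by auto
        also have "\<dots> = s - 1" using False by auto
        finally show False using T'(2) s by auto
      qed
    qed auto
    also have "sum lam {s..<r} = T - lam (s - 1)" unfolding T_def
    proof -
      have "{s-1..<r} = insert (s-1) {s..<r}" using s by auto
      moreover have "s - 1 \<notin> {s..<r}" using s by auto
      ultimately show "sum lam {s..<r} = sum lam {s-1..<r} - lam (s - 1)" by simp
    qed
    also have "d * (T - lam (s-1)) \<le> d * (T - lm)" using lm_le[of "s-1"] s d0 by (intro mult_left_mono) auto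
    finally show ?thesis .
  qed
  have "lm * E \<le> d * lam i * T"
  proof -
    have "lm * E = lm * lam i * d + lm * F" using split by (simp add: algebra_simps)
    also have "lm * F \<le> lm * (d * (T - lm))" using FB lm_pos by (intro mult_left_mono) auto
    also have "lm * (d * (T - lm)) \<le> lam i * (d * (T - lm))"
      using lmi d0 Tge by (intro mult_right_mono) auto
    finally show ?thesis by (simp add: algebra_simps)
  qed
  moreover have "E > 0"
  proof -
    have "{0..<s} \<in> {S. S \<subseteq> {0..<m} \<and> card S = s}" using s rm by auto
    moreover have "prod lam {0..<s} > 0" using pos s by (auto intro: prod_pos)
    moreover have "finite {S. S \<subseteq> {0..<m} \<and> card S = s}" by (auto intro: finite_subset[of _ "Pow {0..<m}"])
    ultimately show ?thesis unfolding E_def esym_def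
      by (intro sum_pos2[where i="{0..<s}"]) (auto intro!: prod_nonneg simp: nn)
  qed
  moreover have "T > 0" using Tge lm_pos by auto
  ultimately show ?thesis unfolding E_def[symmetric] d_def[symmetric] T_def[symmetric] lm_def[symmetric]
    by (simp add: divide_simps mult.commute)
qed


lemma smult_mat_mult_vec:
  fixes M :: "real mat"
  assumes "M \<in> carrier_mat a b" "v \<in> carrier_vec b"
  shows "(k \<cdot>\<^sub>m M) *\<^sub>v v = k \<cdot>\<^sub>v (M *\<^sub>v v)"
  using assms by (intro eq_vecI) (auto simp: scalar_prod_def sum_distrib_left ac_simps)

theorem lemma2p3:
  fixes A U V S :: "real mat" and sigma :: "nat \<Rightarrow> real" and m n r s :: nat
  assumes A: "A \<in> carrier_mat m n"
    and U: "U \<in> carrier_mat m m" and U_orth: "transpose_mat U * U = 1\<^sub>m m"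
    and V: "V \<in> carrier_mat n n" and V_orth: "transpose_mat V * V = 1\<^sub>m n"
    and S: "S \<in> carrier_mat m n"
    and S_entries: "\<And>i j. i < m \<Longrightarrow> j < n \<Longrightarrow> S $$ (i, j) = (if i = j then sigma i else 0)"
    and svd: "A = U * S * transpose_mat V"
    and r_le: "r \<le> min m n"
    and sigma_pos: "\<And>i. i < r \<Longrightarrow> sigma i > 0"
    and sigma_zero: "\<And>i. r \<le> i \<Longrightarrow> i < min m n \<Longrightarrow> sigma i = 0"
    and sigma_mono: "\<And>i j. i \<le> j \<Longrightarrow> j < r \<Longrightarrow> sigma j \<le> sigma i"
    and s: "1 \<le> s" "s \<le> r"
  shows "let lam = (\<lambda>i. if i < r then (sigma i)\<^sup>2 else 0);
             H = (1 / esym {0..<m} lam s) \<cdot>\<^sub>m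
                   (U * mat_diag m (\<lambda>i. esym ({0..<m} - {i}) lam (s - 1)) * transpose_mat U)
         in \<forall>z \<in> carrier_vec n. (\<exists>y \<in> carrier_vec m. z = transpose_mat A *\<^sub>v y) \<longrightarrow>
              z \<bullet> (transpose_mat A * H * A *\<^sub>v z)
                \<ge> (sigma (r - 1))\<^sup>2 / (\<Sum>j = s - 1..<r. (sigma j)\<^sup>2) * (z \<bullet> z)"
proof -
  define lam where "lam = (\<lambda>i. if i < r then (sigma i)\<^sup>2 else (0::real))"
  define dd where "dd = (\<lambda>i. esym ({0..<m} - {i}) lam (s - 1))"
  define E where "E = esym {0..<m} lam s"
  define D where "D = mat_diag m dd"
  define H where "H = (1 / E) \<cdot>\<^sub>m (U * D * transpose_mat U)"
  have D: "D \<in> carrier_mat m m" unfolding D_def by simp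
  have Ut: "transpose_mat U \<in> carrier_mat m m" using U by simp
  have Vt: "transpose_mat V \<in> carrier_mat n n" using V by simp
  have St: "transpose_mat S \<in> carrier_mat n m" using S by simp
  have At: "transpose_mat A \<in> carrier_mat n m" using A by simp
  have H: "H \<in> carrier_mat m m" unfolding H_def using U D by simp
  have VVt: "V * transpose_mat V = 1\<^sub>m n"
    by (rule mat_mult_left_right_inverse[OF Vt V V_orth])
  have At_eq: "transpose_mat A = V * (transpose_mat S * transpose_mat U)"
  proof -
    have US: "U * S \<in> carrier_mat m n" using U S by simp
    have "transpose_mat A = transpose_mat (transpose_mat V) * transpose_mat (U * S)"
      unfolding svd by (rule transpose_mult[OF US Vt])
    also have "transpose_mat (U * S) = transpose_mat S * transpose_mat U"
      by (rule transpose_mult[OF U S])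
    finally show ?thesis by simp
  qed
  show ?thesis
    unfolding Let_def lam_def[symmetric] dd_def[symmetric] E_def[symmetric] D_def[symmetric] H_def[symmetric]
  proof (intro ballI impI)
    fix z :: "real vec" assume z: "z \<in> carrier_vec n" and "\<exists>y \<in> carrier_vec m. z = transpose_mat A *\<^sub>v y"
    then obtain y where y: "y \<in> carrier_vec m" and zy: "z = transpose_mat A *\<^sub>v y" by auto
    define x where "x = transpose_mat U *\<^sub>v y"
    define w where "w = transpose_mat V *\<^sub>v z"
    define u where "u = S *\<^sub>v w"
    have x: "x \<in> carrier_vec m" unfolding x_def using U y by simp
    have w: "w \<in> carrier_vec n" unfolding w_def using V z by simp
    have u: "u \<in> carrier_vec m" unfolding u_def using S w by simp
    have zw: "z = V *\<^sub>v w"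
      unfolding w_def using V z by (simp add: assoc_mult_mat_vec[symmetric, of _ n n _ n] VVt)
    have wx: "w = transpose_mat S *\<^sub>v x"
    proof -
      have q: "transpose_mat S *\<^sub>v x \<in> carrier_vec n" using St x by simp
      have "V * (transpose_mat S * transpose_mat U) *\<^sub>v y = V *\<^sub>v (transpose_mat S *\<^sub>v x)"
        unfolding x_def using V St Ut y
        by (simp add: assoc_mult_mat_vec[OF V, of _ m] assoc_mult_mat_vec[OF St Ut y] mult_carrier_mat[OF St Ut])
      then have "w = transpose_mat V *\<^sub>v (V *\<^sub>v (transpose_mat S *\<^sub>v x))"
        unfolding w_def zy At_eq by simp
      also have "\<dots> = (transpose_mat V * V) *\<^sub>v (transpose_mat S *\<^sub>v x)"
        using Vt V q by simp
      finally show ?thesis using V_orth q by simp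
    qed
    show "(sigma (r - 1))\<^sup>2 / (\<Sum>j = s - 1..<r. (sigma j)\<^sup>2) * (z \<bullet> z)
          \<le> z \<bullet> (transpose_mat A * H * A *\<^sub>v z)"
    proof -
      have Sv: "(S *\<^sub>v v) $ i = (\<Sum>j\<in>{0..<n}. S $$ (i, j) * v $ j)" if "i < m" "v \<in> carrier_vec n" for i v
        using that S by (simp add: scalar_prod_def)
      have Stv: "(transpose_mat S *\<^sub>v v) $ j = (\<Sum>i\<in>{0..<m}. S $$ (i, j) * v $ i)" if "j < n" "v \<in> carrier_vec m" for j v
        using that S by (simp add: scalar_prod_def)
      have w_ent: "w $ j = (if j < r then sigma j * x $ j else 0)" if j: "j < n" for j
      proof -
        have "w $ j = (\<Sum>i\<in>{0..<m}. (if i = j then sigma j * x $ i else 0))"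
          unfolding wx Stv[OF j x] using j by (intro sum.cong) (auto simp: S_entries)
        also have "\<dots> = (if j < m then sigma j * x $ j else 0)" by simp
        finally show ?thesis using sigma_zero[of j] j r_le by auto
      qed
      have u_ent: "u $ i = (if i < r then sigma i * w $ i else 0)" if i: "i < m" for i
      proof -
        have "u $ i = (\<Sum>j\<in>{0..<n}. (if j = i then sigma i * w $ j else 0))"
          unfolding u_def Sv[OF i w] using i by (intro sum.cong) (auto simp: S_entries)
        also have "\<dots> = (if i < n then sigma i * w $ i else 0)" by simp
        finally show ?thesis using sigma_zero[of i] i r_le by auto
      qed
      have zz: "z \<bullet> z = w \<bullet> w"
      proof -
        have "z \<bullet> z = (transpose_mat V *\<^sub>v (V *\<^sub>v w)) \<bullet> w"
          unfolding zw using V w by (simp add: transpose_vec_mult_scalar[OF V w])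
        also have "transpose_mat V *\<^sub>v (V *\<^sub>v w) = w" using V Vt w V_orth
          by (simp add: assoc_mult_mat_vec[OF Vt V w, symmetric])
        finally show ?thesis .
      qed
      have Az: "A *\<^sub>v z = U *\<^sub>v u"
        unfolding svd u_def w_def
        by (subst assoc_mult_mat_vec[OF mult_carrier_mat[OF U S] Vt z], rule assoc_mult_mat_vec[OF U S])
          (use Vt z in simp)
      have Uu: "U *\<^sub>v u \<in> carrier_vec m" using U u by simp
      have Du: "D *\<^sub>v u \<in> carrier_vec m" using D u by simp
      have quad: "z \<bullet> (transpose_mat A * H * A *\<^sub>v z) = (1 / E) * (u \<bullet> (D *\<^sub>v u))"
      proof -
        have "transpose_mat A * H * A *\<^sub>v z = transpose_mat A *\<^sub>v (H *\<^sub>v (A *\<^sub>v z))"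
          by (subst assoc_mult_mat_vec[OF mult_carrier_mat[OF At H] A z], rule assoc_mult_mat_vec[OF At H])
            (use A z in simp)
        also have "H *\<^sub>v (A *\<^sub>v z) = (1 / E) \<cdot>\<^sub>v (U *\<^sub>v (D *\<^sub>v u))"
        proof -
          have "H *\<^sub>v (A *\<^sub>v z) = (1 / E) \<cdot>\<^sub>v ((U * D * transpose_mat U) *\<^sub>v (U *\<^sub>v u))"
            unfolding H_def Az using U D Ut Uu by (intro smult_mat_mult_vec) auto
          also have "(U * D * transpose_mat U) *\<^sub>v (U *\<^sub>v u) = U *\<^sub>v (D *\<^sub>v (transpose_mat U *\<^sub>v (U *\<^sub>v u)))"
            by (subst assoc_mult_mat_vec[OF mult_carrier_mat[OF U D] Ut Uu], rule assoc_mult_mat_vec[OF U D])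
              (use Ut Uu in simp)
          also have "transpose_mat U *\<^sub>v (U *\<^sub>v u) = u"
            using U Ut u U_orth by (simp add: assoc_mult_mat_vec[OF Ut U u, symmetric])
          finally show ?thesis .
        qed
        finally have "z \<bullet> (transpose_mat A * H * A *\<^sub>v z) = z \<bullet> (transpose_mat A *\<^sub>v ((1 / E) \<cdot>\<^sub>v (U *\<^sub>v (D *\<^sub>v u))))" by simp
        also have "\<dots> = (transpose_mat A *\<^sub>v ((1 / E) \<cdot>\<^sub>v (U *\<^sub>v (D *\<^sub>v u)))) \<bullet> z"
          by (rule comm_scalar_prod[of _ n]) (use z At U Du in auto)
        also have "\<dots> = ((1 / E) \<cdot>\<^sub>v (U *\<^sub>v (D *\<^sub>v u))) \<bullet> (A *\<^sub>v z)"
          by (rule transpose_vec_mult_scalar[OF A z]) (use U Du in auto)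
        also have "\<dots> = (1 / E) * ((U *\<^sub>v (D *\<^sub>v u)) \<bullet> (U *\<^sub>v u))"
          unfolding Az using U Du Uu by simp
        also have "(U *\<^sub>v (D *\<^sub>v u)) \<bullet> (U *\<^sub>v u) = (U *\<^sub>v u) \<bullet> (U *\<^sub>v (D *\<^sub>v u))"
          by (rule comm_scalar_prod[of _ m]) (use U Du Uu in auto)
        also have "\<dots> = (transpose_mat U *\<^sub>v (U *\<^sub>v u)) \<bullet> (D *\<^sub>v u)"
          by (rule transpose_vec_mult_scalar[OF U Du Uu, symmetric])
        also have "transpose_mat U *\<^sub>v (U *\<^sub>v u) = u"
          using U Ut u U_orth by (simp add: assoc_mult_mat_vec[OF Ut U u, symmetric])
        finally show ?thesis .
      qed
      have uDu: "u \<bullet> (D *\<^sub>v u) = (\<Sum>i\<in>{0..<r}. dd i * lam i * (w $ i)^2)"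
      proof -
        have "u \<bullet> (D *\<^sub>v u) = (\<Sum>i\<in>{0..<m}. dd i * (u $ i)^2)"
        proof -
          have mi: "(a::real) * (if P then b else 0) = (if P then a * b else 0)" for a b P by simp
          show ?thesis
            unfolding D_def using u by (simp add: scalar_prod_def mat_diag_def power2_eq_square mi ac_simps)
        qed
        also have "\<dots> = (\<Sum>i\<in>{0..<m}. if i < r then dd i * lam i * (w $ i)^2 else 0)"
          by (intro sum.cong) (auto simp: u_ent lam_def power_mult_distrib)
        also have "\<dots> = (\<Sum>i\<in>{0..<r}. dd i * lam i * (w $ i)^2)"
        proof -
          have "{0..<m} \<inter> {i. i < r} = {0..<r}" "{0..<n} \<inter> {i. i < r} = {0..<r}" using r_le by auto
          then show ?thesis by (simp add: sum.If_cases)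
        qed
        finally show ?thesis .
      qed
      have ww: "w \<bullet> w = (\<Sum>i\<in>{0..<r}. (w $ i)^2)"
      proof -
        have "w \<bullet> w = (\<Sum>i\<in>{0..<n}. (w $ i)^2)"
          using w by (simp add: scalar_prod_def power2_eq_square)
        also have "\<dots> = (\<Sum>i\<in>{0..<n}. if i < r then (w $ i)^2 else 0)"
          by (intro sum.cong) (auto simp: w_ent)
        also have "\<dots> = (\<Sum>i\<in>{0..<r}. (w $ i)^2)"
        proof -
          have "{0..<m} \<inter> {i. i < r} = {0..<r}" "{0..<n} \<inter> {i. i < r} = {0..<r}" using r_le by auto
          then show ?thesis by (simp add: sum.If_cases)
        qed
        finally show ?thesis .
      qed
      have lamT: "(sigma (r - 1))\<^sup>2 / (\<Sum>j = s - 1..<r. (sigma j)\<^sup>2) = lam (r - 1) / (\<Sum>j = s - 1..<r. lam j)"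
        using s unfolding lam_def by (auto intro!: sum.cong)
      have cb: "lam (r - 1) / (\<Sum>j = s - 1..<r. lam j) \<le> dd i * lam i / E" if "i < r" for i
        unfolding dd_def E_def
      proof (rule coef_bound[where r=r])
        show "\<And>j. j < r \<Longrightarrow> lam j > 0" unfolding lam_def using sigma_pos by (metis zero_less_power2 less_irrefl)
        show "\<And>j. r \<le> j \<Longrightarrow> lam j = 0" unfolding lam_def by auto
        fix i j assume ij: "i \<le> j" "j < r"
        then have "(sigma j)\<^sup>2 \<le> (sigma i)\<^sup>2"
          using sigma_mono[OF ij] sigma_pos[of j] by (intro power_mono) auto
        then show "lam j \<le> lam i" unfolding lam_def using ij by auto
      qed (use r_le s that in auto)
      have "lam (r - 1) / (\<Sum>j = s - 1..<r. lam j) * (z \<bullet> z)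
          = (\<Sum>i\<in>{0..<r}. lam (r - 1) / (\<Sum>j = s - 1..<r. lam j) * (w $ i)^2)"
        unfolding zz ww by (simp add: sum_distrib_left)
      also have "\<dots> \<le> (\<Sum>i\<in>{0..<r}. dd i * lam i / E * (w $ i)^2)"
        by (intro sum_mono mult_right_mono cb) auto
      also have "\<dots> = z \<bullet> (transpose_mat A * H * A *\<^sub>v z)"
        unfolding quad uDu by (simp add: sum_distrib_left)
      finally show ?thesis unfolding lamT .
    qed
  qed
qed
end
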